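(* Let $R$ be a commutative ring with identity, $M$ an $R$-module, $a\in R$, and $\mathfrak{a}=aR$ the ideal of $R$ generated by $a$. The following statements are equivalent: (1) $M$ is $a$-reduced; (2) $a\Gamma_{a}(M)=0$; (3) $(0:_M a)=(0:_M a^{k})$ for all $k\in\mathbb{Z}^{+}$; (4) $\varinjlim_{k}\operatorname{Hom}_R(R/\mathfrak{a}^{k},M)\cong \operatorname{Hom}_R(R/\mathfrak{a},M)$; (5) $\Gamma_{a}(M)\cong \operatorname{Hom}_R(R/\mathfrak{a},M)$; (6) $0\to \Gamma_{a}(M)\to M\to aM\to 0$ is a short exact sequence, where the first map is the inclusion and the second is $m\mapsto am$.
   Context: All rings are commutative with identity. For an $R$-module $M$ and $a\in R$: $M$ is called $a$-reduced if for all $m\in M$, $a^{2}m=0$ implies $am=0$. $\Gamma_{a}(M)=\{m\in M \mid a^{k}m=0 \text{ for some } k\in\mathbb{Z}^{+}\}$, and $a\Gamma_{a}(M)=\{am \mid m\in M,\ a^{k}m=0 \text{ for some } k\in\mathbb{Z}^{+}\}$. For $k\in\mathbb{Z}^+$, $(0:_M a^{k})=\{m\in M\mid a^{k}m=0\}$. The direct limit in (4) is over the natural maps induced by the surjections $R/\mathfrak{a}^{k+1}\to R/\mathfrak{a}^{k}$. *)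

theory Defs
  imports "HOL-Algebra.Module" "HOL-Algebra.QuotRing" "HOL-Algebra.Ideal_Product"
begin

definition a_reduced :: "('r,'x) ring_scheme \<Rightarrow> ('r,'m,'y) module_scheme \<Rightarrow> 'r \<Rightarrow> bool" where
  "a_reduced R M a \<longleftrightarrow> (\<forall>m\<in>carrier M.
      (a [^]\<^bsub>R\<^esub> (2::nat)) \<odot>\<^bsub>M\<^esub> m = \<zero>\<^bsub>M\<^esub> \<longrightarrow> a \<odot>\<^bsub>M\<^esub> m = \<zero>\<^bsub>M\<^esub>)"

definition Gamma :: "('r,'x) ring_scheme \<Rightarrow> ('r,'m,'y) module_scheme \<Rightarrow> 'r \<Rightarrow> 'm set" where
  "Gamma R M a = {m \<in> carrier M. \<exists>k::nat. k \<ge> 1 \<and> (a [^]\<^bsub>R\<^esub> k) \<odot>\<^bsub>M\<^esub> m = \<zero>\<^bsub>M\<^esub>}"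

definition aGamma :: "('r,'x) ring_scheme \<Rightarrow> ('r,'m,'y) module_scheme \<Rightarrow> 'r \<Rightarrow> 'm set" where
  "aGamma R M a = {a \<odot>\<^bsub>M\<^esub> m | m. m \<in> Gamma R M a}"

definition ann_in :: "('r,'x) ring_scheme \<Rightarrow> ('r,'m,'y) module_scheme \<Rightarrow> 'r \<Rightarrow> nat \<Rightarrow> 'm set" where
  "ann_in R M a k = {m \<in> carrier M. (a [^]\<^bsub>R\<^esub> k) \<odot>\<^bsub>M\<^esub> m = \<zero>\<^bsub>M\<^esub>}"

definition scaled_by :: "('r,'m,'y) module_scheme \<Rightarrow> 'r \<Rightarrow> 'm set" where
  "scaled_by M a = {a \<odot>\<^bsub>M\<^esub> m | m. m \<in> carrier M}"

definition mod_hom :: "('r,'x) ring_scheme \<Rightarrow> ('r,'n,'y) module_scheme \<Rightarrow> ('r,'m,'z) module_scheme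
    \<Rightarrow> ('n \<Rightarrow> 'm) \<Rightarrow> bool" where
  "mod_hom R N M f \<longleftrightarrow> f \<in> carrier N \<rightarrow> carrier M
     \<and> (\<forall>x\<in>carrier N. \<forall>y\<in>carrier N. f (x \<oplus>\<^bsub>N\<^esub> y) = f x \<oplus>\<^bsub>M\<^esub> f y)
     \<and> (\<forall>r\<in>carrier R. \<forall>x\<in>carrier N. f (r \<odot>\<^bsub>N\<^esub> x) = r \<odot>\<^bsub>M\<^esub> f x)"

definition mod_iso :: "('r,'x) ring_scheme \<Rightarrow> ('r,'n,'y) module_scheme \<Rightarrow> ('r,'m,'z) module_scheme \<Rightarrow> bool" where
  "mod_iso R N M \<longleftrightarrow> (\<exists>f. mod_hom R N M f \<and> bij_betw f (carrier N) (carrier M))"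

definition mod_short_exact :: "('r,'x) ring_scheme \<Rightarrow> ('r,'a,'y1) module_scheme \<Rightarrow> ('r,'b,'y2) module_scheme
    \<Rightarrow> ('r,'c,'y3) module_scheme \<Rightarrow> ('a \<Rightarrow> 'b) \<Rightarrow> ('b \<Rightarrow> 'c) \<Rightarrow> bool" where
  "mod_short_exact R A B C f g \<longleftrightarrow> module R A \<and> module R B \<and> module R C
     \<and> mod_hom R A B f \<and> mod_hom R B C g
     \<and> inj_on f (carrier A)
     \<and> f ` carrier A = {y \<in> carrier B. g y = \<zero>\<^bsub>C\<^esub>}
     \<and> g ` carrier B = carrier C"

definition quot_mod :: "('r,'x) ring_scheme \<Rightarrow> 'r set \<Rightarrow> ('r, 'r set) module" where
  "quot_mod R I = \<lparr>carrier = a_rcosets\<^bsub>R\<^esub> I, mult = rcoset_mult R I, one = a_r_coset R I \<one>\<^bsub>R\<^esub>,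
     zero = I, add = set_add R, smult = (\<lambda>r B. rcoset_mult R I (a_r_coset R I r) B)\<rparr>"

definition Hom_mod :: "('r,'x) ring_scheme \<Rightarrow> ('r,'n,'y) module_scheme \<Rightarrow> ('r,'m,'z) module_scheme
    \<Rightarrow> ('r, 'n \<Rightarrow> 'm) module" where
  "Hom_mod R N M = \<lparr>carrier = {f. mod_hom R N M f \<and> f \<in> extensional (carrier N)},
     mult = (\<lambda>f g. undefined), one = undefined,
     zero = (\<lambda>x\<in>carrier N. \<zero>\<^bsub>M\<^esub>),
     add = (\<lambda>f g. \<lambda>x\<in>carrier N. f x \<oplus>\<^bsub>M\<^esub> g x),
     smult = (\<lambda>r f. \<lambda>x\<in>carrier N. r \<odot>\<^bsub>M\<^esub> f x)\<rparr>"

primrec itr :: "(nat \<Rightarrow> 'e \<Rightarrow> 'e) \<Rightarrow> nat \<Rightarrow> nat \<Rightarrow> 'e \<Rightarrow> 'e" where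
  "itr \<phi> n 0 = id"
| "itr \<phi> n (Suc d) = \<phi> (n + d) \<circ> itr \<phi> n d"

definition dl_rel :: "(nat \<Rightarrow> ('r,'e,'y) module_scheme) \<Rightarrow> (nat \<Rightarrow> 'e \<Rightarrow> 'e) \<Rightarrow> ((nat \<times> 'e) \<times> (nat \<times> 'e)) set" where
  "dl_rel Ms \<phi> = {((n,x),(m,y)). x \<in> carrier (Ms n) \<and> y \<in> carrier (Ms m) \<and>
      (\<exists>N. n \<le> N \<and> m \<le> N \<and> itr \<phi> n (N - n) x = itr \<phi> m (N - m) y)}"

definition dirlim :: "('r,'x) ring_scheme \<Rightarrow> (nat \<Rightarrow> ('r,'e,'y) module_scheme) \<Rightarrow> (nat \<Rightarrow> 'e \<Rightarrow> 'e)
    \<Rightarrow> ('r, (nat \<times> 'e) set) module" where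
  "dirlim R Ms \<phi> = \<lparr>carrier = (SIGMA n:UNIV. carrier (Ms n)) // dl_rel Ms \<phi>,
     mult = (\<lambda>A B. undefined), one = undefined,
     zero = dl_rel Ms \<phi> `` {(0, \<zero>\<^bsub>Ms 0\<^esub>)},
     add = (\<lambda>A B. \<Union>(n,x)\<in>A. \<Union>(m,y)\<in>B.
        dl_rel Ms \<phi> `` {(max n m, itr \<phi> n (max n m - n) x \<oplus>\<^bsub>Ms (max n m)\<^esub> itr \<phi> m (max n m - m) y)}),
     smult = (\<lambda>r A. \<Union>(n,x)\<in>A. dl_rel Ms \<phi> `` {(n, r \<odot>\<^bsub>Ms n\<^esub> x)})\<rparr>"

definition ideal_pow :: "('r,'x) ring_scheme \<Rightarrow> 'r set \<Rightarrow> nat \<Rightarrow> 'r set" where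
  "ideal_pow R I k = I [^]\<^bsub>ideals_set R\<^esub> k"

text \<open>The system \<open>Hom_R(R/\<aa>^k, M)\<close>, \<open>k = 1, 2, \<dots>\<close> (index n stands for k = n+1), with the maps
  induced by the natural surjections \<open>R/\<aa>^(k+1) \<rightarrow> R/\<aa>^k\<close>, \<open>x + \<aa>^(k+1) \<mapsto> x + \<aa>^k\<close>.\<close>
definition hom_sys :: "('r,'x) ring_scheme \<Rightarrow> ('r,'m,'y) module_scheme \<Rightarrow> 'r set \<Rightarrow> nat \<Rightarrow> ('r, 'r set \<Rightarrow> 'm) module" where
  "hom_sys R M I n = Hom_mod R (quot_mod R (ideal_pow R I (n+1))) M"

definition hom_sys_map :: "('r,'x) ring_scheme \<Rightarrow> 'r set \<Rightarrow> nat \<Rightarrow> ('r set \<Rightarrow> 'm) \<Rightarrow> ('r set \<Rightarrow> 'm)" where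
  "hom_sys_map R I n f = (\<lambda>X\<in>carrier (quot_mod R (ideal_pow R I (n+2))).
       f (ideal_pow R I (n+1) <+>\<^bsub>R\<^esub> X))"

end

theory Submission
  imports Defs
begin

definition hv :: "('r,'x) ring_scheme \<Rightarrow> ('r,'m,'y) module_scheme \<Rightarrow> 'r set \<Rightarrow> 'm \<Rightarrow> 'r set \<Rightarrow> 'm" where
  "hv R M K v = (\<lambda>X\<in>a_rcosets\<^bsub>R\<^esub> K. SOME y. \<exists>r\<in>carrier R. X = K +>\<^bsub>R\<^esub> r \<and> y = r \<odot>\<^bsub>M\<^esub> v)"

locale mt = module R M for R :: "('r,'x) ring_scheme" (structure) and M :: "('r,'m,'y) module_scheme" (structure) +
  fixes a :: 'r
  assumes a_carr: "a \<in> carrier R"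
begin

definition kills :: "'r set \<Rightarrow> 'm \<Rightarrow> bool" where
  "kills K v \<longleftrightarrow> (\<forall>x\<in>K. x \<odot>\<^bsub>M\<^esub> v = \<zero>\<^bsub>M\<^esub>)"

lemma quot_carrier[simp]: "carrier (quot_mod R K) = a_rcosets K"
  by (simp add: quot_mod_def)

lemma coset_diff:
  assumes "ideal K R" "r \<in> carrier R" "s \<in> carrier R" "K +> r = K +> s"
  shows "r \<ominus> s \<in> K"
proof -
  interpret K: ideal K R by fact
  have "r \<in> K +> s" using assms K.a_rcos_self by force
  then obtain k where k: "k \<in> K" "r = k \<oplus> s" unfolding a_r_coset_def' by blast
  have kc: "k \<in> carrier R" using k(1) K.a_subset by blast
  have "r \<ominus> s = k" using assms(3) kc k(2)
    by (simp add: R.minus_eq R.a_assoc R.r_neg)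
  with k show ?thesis by simp
qed

lemma smult_eq_from_kills:
  assumes "ideal K R" "r \<in> carrier R" "s \<in> carrier R" "K +> r = K +> s"
    "v \<in> carrier M" "kills K v"
  shows "r \<odot>\<^bsub>M\<^esub> v = s \<odot>\<^bsub>M\<^esub> v"
proof -
  have "(r \<ominus> s) \<odot>\<^bsub>M\<^esub> v = \<zero>\<^bsub>M\<^esub>" using coset_diff[OF assms(1-4)] assms(6) kills_def by blast
  then have "r \<odot>\<^bsub>M\<^esub> v \<oplus>\<^bsub>M\<^esub> \<ominus>\<^bsub>M\<^esub> (s \<odot>\<^bsub>M\<^esub> v) = \<zero>\<^bsub>M\<^esub>"
    using assms by (simp add: a_minus_def smult_l_distr smult_l_minus)
  then show ?thesis using assms
    by (metis M.add.inv_closed M.add.inv_equality M.add.inv_inv M.add.m_comm smult_closed)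
qed

lemma hv_val:
  assumes "ideal K R" "v \<in> carrier M" "kills K v" "r \<in> carrier R"
  shows "hv R M K v (K +> r) = r \<odot>\<^bsub>M\<^esub> v"
proof -
  interpret K: ideal K R by fact
  have mem: "K +> r \<in> a_rcosets K" using assms K.a_subset by (auto simp: A_RCOSETS_def')
  have "\<exists>s\<in>carrier R. K +> r = K +> s \<and> r \<odot>\<^bsub>M\<^esub> v = s \<odot>\<^bsub>M\<^esub> v" using assms by blast
  then have "\<exists>y. \<exists>s\<in>carrier R. K +> r = K +> s \<and> y = s \<odot>\<^bsub>M\<^esub> v" by blast
  from someI_ex[OF this] obtain s where s: "s \<in> carrier R" "K +> r = K +> s"
    "(SOME y. \<exists>s\<in>carrier R. K +> r = K +> s \<and> y = s \<odot>\<^bsub>M\<^esub> v) = s \<odot>\<^bsub>M\<^esub> v" by blast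
  show ?thesis unfolding hv_def using mem s smult_eq_from_kills[OF assms(1,4) s(1,2) assms(2,3)] by simp
qed

lemma quot_add[simp]: "X \<oplus>\<^bsub>quot_mod R K\<^esub> Y = set_add R X Y"
  by (simp add: quot_mod_def)
lemma quot_smult[simp]: "r \<odot>\<^bsub>quot_mod R K\<^esub> X = rcoset_mult R K (K +> r) X"
  by (simp add: quot_mod_def)
lemma Hom_carrier[simp]: "carrier (Hom_mod R N M) = {f. mod_hom R N M f \<and> f \<in> extensional (carrier N)}"
  by (simp add: Hom_mod_def)
lemma Hom_add[simp]: "f \<oplus>\<^bsub>Hom_mod R N M\<^esub> g = (\<lambda>x\<in>carrier N. f x \<oplus>\<^bsub>M\<^esub> g x)"
  by (simp add: Hom_mod_def)
lemma Hom_smult[simp]: "r \<odot>\<^bsub>Hom_mod R N M\<^esub> f = (\<lambda>x\<in>carrier N. r \<odot>\<^bsub>M\<^esub> f x)"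
  by (simp add: Hom_mod_def)

lemma rcosets_obtain:
  assumes "X \<in> a_rcosets K"
  obtains r where "r \<in> carrier R" "X = K +> r"
  using assms unfolding A_RCOSETS_def' by blast

lemma coset_in: "r \<in> carrier R \<Longrightarrow> K +> r \<in> a_rcosets K"
  unfolding A_RCOSETS_def' by blast

lemma hv_out: "X \<notin> a_rcosets K \<Longrightarrow> hv R M K v X = undefined"
  unfolding hv_def restrict_def by (rule if_not_P)

lemma hv_hom:
  assumes "ideal K R" "v \<in> carrier M" "kills K v"
  shows "hv R M K v \<in> carrier (Hom_mod R (quot_mod R K) M)"
proof -
  interpret K: ideal K R by fact
  have "mod_hom R (quot_mod R K) M (hv R M K v)"
    unfolding mod_hom_def
  proof (intro conjI ballI)
    show "hv R M K v \<in> carrier (quot_mod R K) \<rightarrow> carrier M"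
    proof
      fix X assume "X \<in> carrier (quot_mod R K)"
      then obtain r where "r \<in> carrier R" "X = K +> r" using rcosets_obtain by auto
      then show "hv R M K v X \<in> carrier M" using hv_val[OF assms] assms(2) by simp
    qed
  next
    fix X Y assume "X \<in> carrier (quot_mod R K)" "Y \<in> carrier (quot_mod R K)"
    then obtain r s where rs: "r \<in> carrier R" "X = K +> r" "s \<in> carrier R" "Y = K +> s"
      using rcosets_obtain by (metis quot_carrier)
    have "X \<oplus>\<^bsub>quot_mod R K\<^esub> Y = K +> (r \<oplus> s)" using rs K.a_rcos_sum by simp
    then show "hv R M K v (X \<oplus>\<^bsub>quot_mod R K\<^esub> Y) = hv R M K v X \<oplus>\<^bsub>M\<^esub> hv R M K v Y"
      using rs hv_val[OF assms] assms(2) by (simp add: smult_l_distr)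
  next
    fix r X assume "r \<in> carrier R" "X \<in> carrier (quot_mod R K)"
    then obtain s where rs: "r \<in> carrier R" "s \<in> carrier R" "X = K +> s"
      using rcosets_obtain by (metis quot_carrier)
    have "r \<odot>\<^bsub>quot_mod R K\<^esub> X = K +> (r \<otimes> s)" using rs K.rcoset_mult_add by simp
    then show "hv R M K v (r \<odot>\<^bsub>quot_mod R K\<^esub> X) = r \<odot>\<^bsub>M\<^esub> hv R M K v X"
      using rs hv_val[OF assms] assms(2) by (simp add: smult_assoc1)
  qed
  moreover have "hv R M K v \<in> extensional (carrier (quot_mod R K))"
    unfolding hv_def by simp
  ultimately show ?thesis by simp
qed

lemma hom_val:
  assumes "ideal K R" "f \<in> carrier (Hom_mod R (quot_mod R K) M)" "r \<in> carrier R"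
  shows "f (K +> r) = r \<odot>\<^bsub>M\<^esub> f (K +> \<one>)"
proof -
  interpret K: ideal K R by fact
  have e: "r \<odot>\<^bsub>quot_mod R K\<^esub> (K +> \<one>) = K +> r" using assms K.rcoset_mult_add by simp
  have c: "K +> \<one> \<in> carrier (quot_mod R K)" using coset_in by simp
  have h: "\<forall>r\<in>carrier R. \<forall>x\<in>carrier (quot_mod R K). f (r \<odot>\<^bsub>quot_mod R K\<^esub> x) = r \<odot>\<^bsub>M\<^esub> f x"
    using assms(2) unfolding Hom_carrier mem_Collect_eq mod_hom_def by (elim conjE) assumption
  show ?thesis using h[rule_format, OF assms(3) c] unfolding e .
qed

lemma hom_rep:
  assumes "ideal K R" "f \<in> carrier (Hom_mod R (quot_mod R K) M)"
  shows "f (K +> \<one>) \<in> carrier M" "kills K (f (K +> \<one>))" "f = hv R M K (f (K +> \<one>))"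
proof -
  interpret K: ideal K R by fact
  have c1: "K +> \<one> \<in> carrier (quot_mod R K)" using coset_in by simp
  have "f \<in> carrier (quot_mod R K) \<rightarrow> carrier M"
    using assms(2) unfolding Hom_carrier mem_Collect_eq mod_hom_def by (elim conjE) assumption
  then show v: "f (K +> \<one>) \<in> carrier M" using c1 by blast
  show k: "kills K (f (K +> \<one>))" unfolding kills_def
  proof
    fix x assume x: "x \<in> K"
    then have xc: "x \<in> carrier R" using K.a_subset by blast
    have "K +> x = K +> \<zero>" using x K.a_rcos_const by simp
    have "x \<odot>\<^bsub>M\<^esub> f (K +> \<one>) = f (K +> x)" using hom_val[OF assms xc] by simp
    also have "\<dots> = f (K +> \<zero>)" using \<open>K +> x = K +> \<zero>\<close> by simp
    also have "\<dots> = \<zero> \<odot>\<^bsub>M\<^esub> f (K +> \<one>)" using hom_val[OF assms R.zero_closed] by simp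
    finally show "x \<odot>\<^bsub>M\<^esub> f (K +> \<one>) = \<zero>\<^bsub>M\<^esub>" using v by simp
  qed
  show "f = hv R M K (f (K +> \<one>))"
  proof
    fix X show "f X = hv R M K (f (K +> \<one>)) X"
    proof (cases "X \<in> a_rcosets K")
      case True
      then obtain r where r: "r \<in> carrier R" "X = K +> r" using rcosets_obtain by blast
      show ?thesis unfolding r(2) hom_val[OF assms r(1)] hv_val[OF assms(1) v k r(1)] ..
    next
      case False
      have ext: "f \<in> extensional (a_rcosets K)"
        using assms(2) unfolding Hom_carrier quot_carrier mem_Collect_eq by (elim conjE)
      have "f X = undefined" using ext False by (rule extensional_arb)
      moreover have "hv R M K (f (K +> \<one>)) X = undefined" unfolding hv_def restrict_def using False by (rule if_not_P)
      ultimately show ?thesis by simp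
    qed
  qed
qed

lemma hv_eqI:
  assumes "ideal K R" "v \<in> carrier M" "kills K v" "w \<in> carrier M" "kills K w"
    "\<And>r. r \<in> carrier R \<Longrightarrow> r \<odot>\<^bsub>M\<^esub> v = r \<odot>\<^bsub>M\<^esub> w"
  shows "hv R M K v = hv R M K w"
proof
  fix X show "hv R M K v X = hv R M K w X"
  proof (cases "X \<in> a_rcosets K")
    case True
    then obtain r where "r \<in> carrier R" "X = K +> r" using rcosets_obtain by blast
    then show ?thesis using hv_val[OF assms(1-3)] hv_val[OF assms(1,4,5)] assms(6) by simp
  qed (simp add: hv_out)
qed

lemma hv_inj:
  assumes "ideal K R" "v \<in> carrier M" "kills K v" "w \<in> carrier M" "kills K w"
    "hv R M K v = hv R M K w"
  shows "v = w"
proof -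
  have "v = hv R M K v (K +> \<one>)" using hv_val[OF assms(1-3) R.one_closed] assms(2) by simp
  also have "\<dots> = hv R M K w (K +> \<one>)" using assms(6) by simp
  also have "\<dots> = w" using hv_val[OF assms(1,4,5) R.one_closed] assms(4) by simp
  finally show ?thesis .
qed

lemma kills_add: "kills K v \<Longrightarrow> kills K w \<Longrightarrow> K \<subseteq> carrier R \<Longrightarrow> v \<in> carrier M \<Longrightarrow> w \<in> carrier M
   \<Longrightarrow> kills K (v \<oplus>\<^bsub>M\<^esub> w)"
  unfolding kills_def by (auto simp: smult_r_distr subset_iff)

lemma kills_smult: "kills K v \<Longrightarrow> K \<subseteq> carrier R \<Longrightarrow> v \<in> carrier M \<Longrightarrow> r \<in> carrier R
   \<Longrightarrow> kills K (r \<odot>\<^bsub>M\<^esub> v)"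
  unfolding kills_def
proof
  fix x assume "\<forall>x\<in>K. x \<odot>\<^bsub>M\<^esub> v = \<zero>\<^bsub>M\<^esub>" "K \<subseteq> carrier R" "v \<in> carrier M" "r \<in> carrier R" "x \<in> K"
  then have xc: "x \<in> carrier R" by blast
  have "x \<odot>\<^bsub>M\<^esub> (r \<odot>\<^bsub>M\<^esub> v) = (x \<otimes> r) \<odot>\<^bsub>M\<^esub> v" using xc \<open>r \<in> carrier R\<close> \<open>v \<in> carrier M\<close> by (simp add: smult_assoc1)
  also have "\<dots> = (r \<otimes> x) \<odot>\<^bsub>M\<^esub> v" using xc \<open>r \<in> carrier R\<close> R.m_comm by simp
  also have "\<dots> = r \<odot>\<^bsub>M\<^esub> (x \<odot>\<^bsub>M\<^esub> v)" using xc \<open>r \<in> carrier R\<close> \<open>v \<in> carrier M\<close> by (simp add: smult_assoc1)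
  finally show "x \<odot>\<^bsub>M\<^esub> (r \<odot>\<^bsub>M\<^esub> v) = \<zero>\<^bsub>M\<^esub>" using \<open>x \<in> K\<close> \<open>\<forall>x\<in>K. x \<odot>\<^bsub>M\<^esub> v = \<zero>\<^bsub>M\<^esub>\<close> \<open>r \<in> carrier R\<close> by simp
qed

lemma hv_add:
  assumes "ideal K R" "v \<in> carrier M" "kills K v" "w \<in> carrier M" "kills K w"
  shows "hv R M K v \<oplus>\<^bsub>Hom_mod R (quot_mod R K) M\<^esub> hv R M K w = hv R M K (v \<oplus>\<^bsub>M\<^esub> w)"
proof -
  interpret K: ideal K R by fact
  have kvw: "kills K (v \<oplus>\<^bsub>M\<^esub> w)" using kills_add assms K.a_subset by blast
  show ?thesis
  proof
    fix X show "(hv R M K v \<oplus>\<^bsub>Hom_mod R (quot_mod R K) M\<^esub> hv R M K w) X = hv R M K (v \<oplus>\<^bsub>M\<^esub> w) X"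
    proof (cases "X \<in> a_rcosets K")
      case True
      then obtain r where "r \<in> carrier R" "X = K +> r" using rcosets_obtain by blast
      then show ?thesis using hv_val[OF assms(1-3)] hv_val[OF assms(1,4,5)] hv_val[OF assms(1) _ kvw] assms
        by (simp add: smult_r_distr coset_in)
    qed (simp add: hv_out)
  qed
qed

lemma hv_smult:
  assumes "ideal K R" "v \<in> carrier M" "kills K v" "s \<in> carrier R"
  shows "s \<odot>\<^bsub>Hom_mod R (quot_mod R K) M\<^esub> hv R M K v = hv R M K (s \<odot>\<^bsub>M\<^esub> v)"
proof -
  interpret K: ideal K R by fact
  have kvw: "kills K (s \<odot>\<^bsub>M\<^esub> v)" using kills_smult assms K.a_subset by blast
  show ?thesis
  proof
    fix X show "(s \<odot>\<^bsub>Hom_mod R (quot_mod R K) M\<^esub> hv R M K v) X = hv R M K (s \<odot>\<^bsub>M\<^esub> v) X"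
    proof (cases "X \<in> a_rcosets K")
      case True
      then obtain r where "r \<in> carrier R" "X = K +> r" using rcosets_obtain by blast
      then show ?thesis using hv_val[OF assms(1-3)] hv_val[OF assms(1) _ kvw] assms
        by (simp add: coset_in) (metis R.m_comm smult_assoc1)
    qed (simp add: hv_out)
  qed
qed


definition J :: "nat \<Rightarrow> 'r set" where "J n = ideal_pow R (PIdl a) n"

lemma I_ideal: "ideal (PIdl a) R"
  using R.cgenideal_ideal[OF a_carr] .

lemma J_ideal: "ideal (J n) R"
proof -
  interpret I: comm_monoid "ideals_set R" by (rule R.ideals_set_is_comm_monoid)
  have "PIdl a \<in> carrier (ideals_set R)" using I_ideal by (simp add: ideals_set_def)
  then have "PIdl a [^]\<^bsub>ideals_set R\<^esub> n \<in> carrier (ideals_set R)" by (rule I.nat_pow_closed)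
  then show ?thesis by (simp add: ideals_set_def J_def ideal_pow_def)
qed

lemma J_0: "J 0 = carrier R"
  by (simp add: J_def ideal_pow_def ideals_set_def)

lemma J_Suc: "J (Suc n) = ideal_prod R (J n) (PIdl a)"
  by (simp add: J_def ideal_pow_def ideals_set_def)

lemma J_sub_Suc: "J (Suc n) \<subseteq> J n"
  using R.ideal_prod_inter[OF J_ideal I_ideal] J_Suc by blast

lemma J_mono: "m \<le> n \<Longrightarrow> J n \<subseteq> J m"
proof (induction n)
  case 0 then show ?case by simp
next
  case (Suc n)
  show ?case
  proof (cases "m = Suc n")
    case False then show ?thesis using Suc J_sub_Suc by force
  qed simp
qed

lemma J_carr: "J n \<subseteq> carrier R"
  using J_mono[of 0 n] J_0 by simp

lemma J_sub_pow: "J n \<subseteq> PIdl (a [^] n)"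
proof (induction n)
  case 0
  show ?case unfolding J_0 cgenideal_def
  proof
    fix x assume x: "x \<in> carrier R"
    then have "x = x \<otimes> a [^] (0::nat)" by simp
    then show "x \<in> {y \<otimes> a [^] (0::nat) |y. y \<in> carrier R}" using x by blast
  qed
next
  case (Suc n)
  interpret P: ideal "PIdl (a [^] Suc n)" R using R.cgenideal_ideal a_carr by simp
  show ?case unfolding J_Suc
  proof
    fix x assume "x \<in> ideal_prod R (J n) (PIdl a)"
    then show "x \<in> PIdl (a [^] Suc n)"
    proof (induction x rule: ideal_prod.induct)
      case (prod i j)
      then obtain y z where yz: "y \<in> carrier R" "i = y \<otimes> a [^] n" "z \<in> carrier R" "j = z \<otimes> a"
        using Suc.IH unfolding cgenideal_def by blast
      have an: "a [^] n \<in> carrier R" using a_carr by simp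
      have "i \<otimes> j = (y \<otimes> z) \<otimes> (a [^] n \<otimes> a)"
        unfolding yz(2,4) using yz(1,3) an a_carr by (metis R.m_assoc R.m_closed R.m_lcomm)
      also have "\<dots> = (y \<otimes> z) \<otimes> a [^] Suc n" by simp
      finally have "i \<otimes> j = (y \<otimes> z) \<otimes> a [^] Suc n" .
      then show ?case unfolding cgenideal_def using yz by blast
    next
      case (sum s1 s2)
      then show ?case using P.a_closed by blast
    qed
  qed
qed

lemma pow_in_J: "a [^] n \<in> J n"
proof (induction n)
  case 0 then show ?case by (simp add: J_0)
next
  case (Suc n)
  have "a \<in> PIdl a" using R.cgenideal_self a_carr by blast
  then show ?case unfolding J_Suc using Suc ideal_prod.prod by simp
qed

lemma kills_J: "v \<in> carrier M \<Longrightarrow> kills (J n) v \<longleftrightarrow> a [^] n \<odot>\<^bsub>M\<^esub> v = \<zero>\<^bsub>M\<^esub>"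
proof
  assume "v \<in> carrier M" "kills (J n) v" then show "a [^] n \<odot>\<^bsub>M\<^esub> v = \<zero>\<^bsub>M\<^esub>"
    using pow_in_J unfolding kills_def by blast
next
  assume v: "v \<in> carrier M" and h: "a [^] n \<odot>\<^bsub>M\<^esub> v = \<zero>\<^bsub>M\<^esub>"
  show "kills (J n) v" unfolding kills_def
  proof
    fix x assume "x \<in> J n"
    then obtain y where y: "y \<in> carrier R" "x = y \<otimes> a [^] n" using J_sub_pow unfolding cgenideal_def by blast
    then show "x \<odot>\<^bsub>M\<^esub> v = \<zero>\<^bsub>M\<^esub>" using v h a_carr by (simp add: smult_assoc1)
  qed
qed

lemma kills_I: "v \<in> carrier M \<Longrightarrow> kills (PIdl a) v \<longleftrightarrow> a \<odot>\<^bsub>M\<^esub> v = \<zero>\<^bsub>M\<^esub>"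
proof
  assume "v \<in> carrier M" "kills (PIdl a) v" then show "a \<odot>\<^bsub>M\<^esub> v = \<zero>\<^bsub>M\<^esub>"
    using R.cgenideal_self a_carr unfolding kills_def by blast
next
  assume v: "v \<in> carrier M" and h: "a \<odot>\<^bsub>M\<^esub> v = \<zero>\<^bsub>M\<^esub>"
  show "kills (PIdl a) v" unfolding kills_def
  proof
    fix x assume "x \<in> PIdl a"
    then obtain y where y: "y \<in> carrier R" "x = y \<otimes> a" unfolding cgenideal_def by blast
    then show "x \<odot>\<^bsub>M\<^esub> v = \<zero>\<^bsub>M\<^esub>" using v h a_carr by (simp add: smult_assoc1)
  qed
qed


abbreviation S where "S \<equiv> hom_sys R M (PIdl a)"
abbreviation Phi where "Phi \<equiv> hom_sys_map R (PIdl a)"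

lemma ann_mono: "m \<le> n \<Longrightarrow> ann_in R M a m \<subseteq> ann_in R M a n"
proof
  fix v assume mn: "m \<le> n" and v: "v \<in> ann_in R M a m"
  then have vc: "v \<in> carrier M" and h: "a [^] m \<odot>\<^bsub>M\<^esub> v = \<zero>\<^bsub>M\<^esub>" by (auto simp: ann_in_def)
  have "a [^] n = a [^] (n - m) \<otimes> a [^] m" using mn a_carr by (simp add: R.nat_pow_mult)
  then have "a [^] n \<odot>\<^bsub>M\<^esub> v = a [^] (n - m) \<odot>\<^bsub>M\<^esub> (a [^] m \<odot>\<^bsub>M\<^esub> v)"
    using vc a_carr by (simp add: smult_assoc1)
  then show "v \<in> ann_in R M a n" using h vc a_carr by (simp add: ann_in_def)
qed

lemma ann_kills: "v \<in> ann_in R M a n \<Longrightarrow> kills (J n) v \<and> v \<in> carrier M"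
  using kills_J by (auto simp: ann_in_def)

lemma S_carrier: "carrier (S n) = carrier (Hom_mod R (quot_mod R (J (Suc n))) M)"
  by (simp add: hom_sys_def J_def)

lemma S_carrier_hv: "carrier (S n) = hv R M (J (Suc n)) ` ann_in R M a (Suc n)"
proof
  show "carrier (S n) \<subseteq> hv R M (J (Suc n)) ` ann_in R M a (Suc n)"
  proof
    fix f assume "f \<in> carrier (S n)"
    then have f: "f \<in> carrier (Hom_mod R (quot_mod R (J (Suc n))) M)" using S_carrier by simp
    note hr = hom_rep[OF J_ideal f]
    have "f (J (Suc n) +> \<one>) \<in> ann_in R M a (Suc n)"
      using hr(1,2) kills_J[OF hr(1)] by (simp add: ann_in_def)
    then show "f \<in> hv R M (J (Suc n)) ` ann_in R M a (Suc n)" using hr(3) by blast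
  qed
next
  show "hv R M (J (Suc n)) ` ann_in R M a (Suc n) \<subseteq> carrier (S n)"
    using hv_hom[OF J_ideal] ann_kills S_carrier by blast
qed

lemma hv_one: "v \<in> ann_in R M a n \<Longrightarrow> hv R M (J n) v (J n +> \<one>) = v"
  using hv_val[OF J_ideal _ _ R.one_closed] ann_kills by simp

lemma nest:
  assumes "L \<subseteq> K" "ideal K R" "ideal L R" "r \<in> carrier R"
  shows "set_add R K (L +> r) = K +> r"
proof -
  interpret K: ideal K R by fact
  interpret L: ideal L R by fact
  show ?thesis
  proof
    show "set_add R K (L +> r) \<subseteq> K +> r"
    proof
      fix x assume "x \<in> set_add R K (L +> r)"
      then obtain k y where ky: "k \<in> K" "y \<in> L +> r" "x = k \<oplus> y"
        unfolding set_add_def' by blast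
      then obtain l where "l \<in> L" "y = l \<oplus> r" unfolding a_r_coset_def' by blast
      then have kl: "k \<in> K" "l \<in> L" "x = k \<oplus> (l \<oplus> r)" using ky by auto
      have kc: "k \<in> carrier R" "l \<in> carrier R" using kl K.a_subset L.a_subset by blast+
      have "x = (k \<oplus> l) \<oplus> r" using kc assms(4) kl(3) R.a_assoc by metis
      moreover have "k \<oplus> l \<in> K" using kl assms(1) K.a_closed by (meson subsetD)
      ultimately show "x \<in> K +> r" unfolding a_r_coset_def' by blast
    qed
  next
    show "K +> r \<subseteq> set_add R K (L +> r)"
    proof
      fix x assume "x \<in> K +> r"
      then obtain k where k: "k \<in> K" "x = k \<oplus> r" unfolding a_r_coset_def' by blast
      have "\<zero> \<oplus> r \<in> L +> r" unfolding a_r_coset_def' using L.zero_closed by blast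
      moreover have "\<zero> \<oplus> r = r" using assms(4) by simp
      ultimately have "r \<in> L +> r" by metis
      then show "x \<in> set_add R K (L +> r)" using k unfolding set_add_def' by blast
    qed
  qed
qed

lemma Phi_hv:
  assumes "v \<in> ann_in R M a (Suc n)"
  shows "Phi n (hv R M (J (Suc n)) v) = hv R M (J (Suc (Suc n))) v"
proof
  fix X
  have v2: "v \<in> ann_in R M a (Suc (Suc n))" using ann_mono[of "Suc n" "Suc (Suc n)"] assms by auto
  show "Phi n (hv R M (J (Suc n)) v) X = hv R M (J (Suc (Suc n))) v X"
  proof (cases "X \<in> a_rcosets (J (Suc (Suc n)))")
    case True
    then obtain r where r: "r \<in> carrier R" "X = J (Suc (Suc n)) +> r" using rcosets_obtain by blast
    have "set_add R (J (Suc n)) X = J (Suc n) +> r" unfolding r(2) using nest J_sub_Suc J_ideal r(1) by blast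
    then have "Phi n (hv R M (J (Suc n)) v) X = r \<odot>\<^bsub>M\<^esub> v"
      using True hv_val[OF J_ideal _ _ r(1)] ann_kills[OF assms]
      by (simp add: hom_sys_map_def J_def[symmetric])
    also have "\<dots> = hv R M (J (Suc (Suc n))) v X"
      unfolding r(2) using hv_val[OF J_ideal _ _ r(1)] ann_kills[OF v2] by simp
    finally show ?thesis .
  next
    case False
    then show ?thesis by (simp add: hom_sys_map_def J_def[symmetric] hv_out)
  qed
qed

lemma itr_hv:
  assumes "v \<in> ann_in R M a (Suc n)"
  shows "itr Phi n d (hv R M (J (Suc n)) v) = hv R M (J (Suc (n + d))) v"
proof (induction d)
  case 0 then show ?case by simp
next
  case (Suc d)
  have "v \<in> ann_in R M a (Suc (n + d))" using ann_mono[of "Suc n" "Suc (n + d)"] assms by auto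
  then show ?case using Suc Phi_hv[of v "n + d"] by simp
qed


lemma union2_const:
  assumes "A \<noteq> {}" "B \<noteq> {}" "\<And>n x m y. (n, x) \<in> A \<Longrightarrow> (m, y) \<in> B \<Longrightarrow> F n x m y = C"
  shows "(\<Union>(n, x)\<in>A. \<Union>(m, y)\<in>B. F n x m y) = C"
proof -
  obtain n x where nx: "(n, x) \<in> A" using assms(1) by auto
  obtain m y where my: "(m, y) \<in> B" using assms(2) by auto
  show ?thesis
  proof
    show "(\<Union>(n, x)\<in>A. \<Union>(m, y)\<in>B. F n x m y) \<subseteq> C" using assms(3) by fastforce
    show "C \<subseteq> (\<Union>(n, x)\<in>A. \<Union>(m, y)\<in>B. F n x m y)" using assms(3)[OF nx my] nx my by fastforce
  qed
qed

lemma union1_const: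
  assumes "A \<noteq> {}" "\<And>n x. (n, x) \<in> A \<Longrightarrow> F n x = C"
  shows "(\<Union>(n, x)\<in>A. F n x) = C"
proof -
  obtain n x where nx: "(n, x) \<in> A" using assms(1) by auto
  show ?thesis
  proof
    show "(\<Union>(n, x)\<in>A. F n x) \<subseteq> C" using assms(2) by fastforce
    show "C \<subseteq> (\<Union>(n, x)\<in>A. F n x)" using assms(2)[OF nx] nx by fastforce
  qed
qed

lemma ann_add: "v \<in> ann_in R M a n \<Longrightarrow> w \<in> ann_in R M a n \<Longrightarrow> v \<oplus>\<^bsub>M\<^esub> w \<in> ann_in R M a n"
  using a_carr by (simp add: ann_in_def smult_r_distr)

lemma ann_smult: "v \<in> ann_in R M a n \<Longrightarrow> r \<in> carrier R \<Longrightarrow> r \<odot>\<^bsub>M\<^esub> v \<in> ann_in R M a n"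
proof -
  assume v: "v \<in> ann_in R M a n" and r: "r \<in> carrier R"
  then have vc: "v \<in> carrier M" and h: "a [^] n \<odot>\<^bsub>M\<^esub> v = \<zero>\<^bsub>M\<^esub>" by (auto simp: ann_in_def)
  have an: "a [^] n \<in> carrier R" using a_carr by simp
  have "a [^] n \<odot>\<^bsub>M\<^esub> (r \<odot>\<^bsub>M\<^esub> v) = (a [^] n \<otimes> r) \<odot>\<^bsub>M\<^esub> v" using an r vc by (simp add: smult_assoc1)
  also have "\<dots> = (r \<otimes> a [^] n) \<odot>\<^bsub>M\<^esub> v" using an r R.m_comm by simp
  also have "\<dots> = r \<odot>\<^bsub>M\<^esub> (a [^] n \<odot>\<^bsub>M\<^esub> v)" using an r vc by (simp add: smult_assoc1)
  also have "\<dots> = \<zero>\<^bsub>M\<^esub>" using h r by simp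
  finally show ?thesis using vc r by (simp add: ann_in_def)
qed

lemma dl_char:
  "((n, f), (m, g)) \<in> dl_rel S Phi \<longleftrightarrow>
     f \<in> carrier (S n) \<and> g \<in> carrier (S m) \<and> f (J (Suc n) +> \<one>) = g (J (Suc m) +> \<one>)"
proof
  assume h: "((n, f), (m, g)) \<in> dl_rel S Phi"
  then have h': "f \<in> carrier (S n) \<and> g \<in> carrier (S m) \<and>
     (\<exists>N. n \<le> N \<and> m \<le> N \<and> itr Phi n (N - n) f = itr Phi m (N - m) g)"
    unfolding dl_rel_def by simp
  then have fc: "f \<in> carrier (S n)" and gc: "g \<in> carrier (S m)" by simp_all
  from h' obtain N where N: "n \<le> N" "m \<le> N" "itr Phi n (N - n) f = itr Phi m (N - m) g" by blast
  obtain v where v: "v \<in> ann_in R M a (Suc n)" "f = hv R M (J (Suc n)) v" using fc S_carrier_hv by blast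
  obtain w where w: "w \<in> ann_in R M a (Suc m)" "g = hv R M (J (Suc m)) w" using gc S_carrier_hv by blast
  have nN: "n + (N - n) = N" "m + (N - m) = N" using N by auto
  have "hv R M (J (Suc N)) v = hv R M (J (Suc N)) w"
    using N(3) unfolding v(2) w(2) itr_hv[OF v(1)] itr_hv[OF w(1)] nN .
  moreover have "v \<in> ann_in R M a (Suc N)" "w \<in> ann_in R M a (Suc N)"
    using v(1) w(1) ann_mono[of "Suc n" "Suc N"] ann_mono[of "Suc m" "Suc N"] N by auto
  ultimately have "v = w" using hv_inj[OF J_ideal] ann_kills by meson
  then show "f \<in> carrier (S n) \<and> g \<in> carrier (S m) \<and> f (J (Suc n) +> \<one>) = g (J (Suc m) +> \<one>)"
  proof (intro conjI fc gc)
    have "f (J (Suc n) +> \<one>) = v" unfolding v(2) using hv_one[OF v(1)] .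
    moreover have "g (J (Suc m) +> \<one>) = w" unfolding w(2) using hv_one[OF w(1)] .
    ultimately show "f (J (Suc n) +> \<one>) = g (J (Suc m) +> \<one>)" using \<open>v = w\<close> by simp
  qed
next
  assume h: "f \<in> carrier (S n) \<and> g \<in> carrier (S m) \<and> f (J (Suc n) +> \<one>) = g (J (Suc m) +> \<one>)"
  obtain v where v: "v \<in> ann_in R M a (Suc n)" "f = hv R M (J (Suc n)) v" using h S_carrier_hv by blast
  obtain w where w: "w \<in> ann_in R M a (Suc m)" "g = hv R M (J (Suc m)) w" using h S_carrier_hv by blast
  have "f (J (Suc n) +> \<one>) = v" unfolding v(2) using hv_one[OF v(1)] .
  moreover have "g (J (Suc m) +> \<one>) = w" unfolding w(2) using hv_one[OF w(1)] .
  ultimately have vw: "v = w" using h by simp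
  define N where "N = max n m"
  have nN: "n + (N - n) = N" "m + (N - m) = N" unfolding N_def by auto
  have "itr Phi n (N - n) f = hv R M (J (Suc N)) v"
    unfolding v(2) itr_hv[OF v(1)] nN ..
  moreover have "itr Phi m (N - m) g = hv R M (J (Suc N)) w"
    unfolding w(2) itr_hv[OF w(1)] nN ..
  ultimately have "itr Phi n (N - n) f = itr Phi m (N - m) g" unfolding vw by (rule trans_sym)
  moreover have "n \<le> N" "m \<le> N" unfolding N_def by auto
  ultimately have "\<exists>N. n \<le> N \<and> m \<le> N \<and> itr Phi n (N - n) f = itr Phi m (N - m) g" by blast
  then show "((n, f), (m, g)) \<in> dl_rel S Phi" using h unfolding dl_rel_def by simp
qed

definition Cl :: "'m \<Rightarrow> (nat \<times> ('r set \<Rightarrow> 'm)) set" where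
  "Cl v = {(m, g). g \<in> carrier (S m) \<and> g (J (Suc m) +> \<one>) = v}"

lemma class_eq: "f \<in> carrier (S n) \<Longrightarrow> dl_rel S Phi `` {(n, f)} = Cl (f (J (Suc n) +> \<one>))"
  unfolding Cl_def using dl_char by auto

lemma Gamma_iff: "v \<in> Gamma R M a \<longleftrightarrow> (\<exists>n. v \<in> ann_in R M a (Suc n))"
proof
  assume "v \<in> Gamma R M a"
  then have h: "v \<in> carrier M \<and> (\<exists>k::nat. 1 \<le> k \<and> a [^] k \<odot>\<^bsub>M\<^esub> v = \<zero>\<^bsub>M\<^esub>)"
    by (simp only: Gamma_def mem_Collect_eq)
  then obtain k :: nat where k: "1 \<le> k" "a [^] k \<odot>\<^bsub>M\<^esub> v = \<zero>\<^bsub>M\<^esub>" by blast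
  have "v \<in> ann_in R M a k" using h k(2) by (simp only: ann_in_def mem_Collect_eq)
  moreover have "Suc (k - 1) = k" using k(1) by arith
  ultimately have "v \<in> ann_in R M a (Suc (k - 1))" by (simp only:)
  then show "\<exists>n. v \<in> ann_in R M a (Suc n)" ..
next
  assume "\<exists>n. v \<in> ann_in R M a (Suc n)"
  then obtain n where "v \<in> ann_in R M a (Suc n)" ..
  then have h: "v \<in> carrier M \<and> a [^] Suc n \<odot>\<^bsub>M\<^esub> v = \<zero>\<^bsub>M\<^esub>" by (simp only: ann_in_def mem_Collect_eq)
  have "(1::nat) \<le> Suc n" by simp
  with h have "v \<in> carrier M \<and> (\<exists>k::nat. 1 \<le> k \<and> a [^] k \<odot>\<^bsub>M\<^esub> v = \<zero>\<^bsub>M\<^esub>)" by blast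
  then show "v \<in> Gamma R M a" by (simp only: Gamma_def mem_Collect_eq)
qed

lemma Cl_mem: "v \<in> ann_in R M a (Suc n) \<Longrightarrow> (n, hv R M (J (Suc n)) v) \<in> Cl v"
  unfolding Cl_def using S_carrier_hv hv_one by auto

lemma Cl_elem: "(m, g) \<in> Cl v \<Longrightarrow> v \<in> ann_in R M a (Suc m) \<and> g = hv R M (J (Suc m)) v"
proof -
  assume "(m, g) \<in> Cl v"
  then have g: "g \<in> carrier (S m)" "g (J (Suc m) +> \<one>) = v" unfolding Cl_def by auto
  then obtain w where w: "w \<in> ann_in R M a (Suc m)" "g = hv R M (J (Suc m)) w" using S_carrier_hv by blast
  have "w = v" using g(2) hv_one[OF w(1)] unfolding w(2) by simp
  then show ?thesis using w by simp
qed

lemma Cl_nonempty: "v \<in> Gamma R M a \<Longrightarrow> Cl v \<noteq> {}"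
  using Gamma_iff Cl_mem by blast

lemma Cl_inj: "v \<in> Gamma R M a \<Longrightarrow> Cl v = Cl w \<Longrightarrow> v = w"
proof -
  assume "v \<in> Gamma R M a" "Cl v = Cl w"
  then obtain n where n: "v \<in> ann_in R M a (Suc n)" using Gamma_iff by blast
  then have "(n, hv R M (J (Suc n)) v) \<in> Cl w" using Cl_mem \<open>Cl v = Cl w\<close> by blast
  then show "v = w" unfolding Cl_def using hv_one[OF n] by simp
qed

lemma dirlim_carrier: "carrier (dirlim R S Phi) = Cl ` Gamma R M a"
proof
  show "carrier (dirlim R S Phi) \<subseteq> Cl ` Gamma R M a"
  proof
    fix A assume "A \<in> carrier (dirlim R S Phi)"
    then obtain n f where nf: "f \<in> carrier (S n)" "A = dl_rel S Phi `` {(n, f)}"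
      unfolding dirlim_def quotient_def by auto
    obtain v where v: "v \<in> ann_in R M a (Suc n)" "f = hv R M (J (Suc n)) v" using nf(1) S_carrier_hv by blast
    have "A = Cl v" using nf class_eq hv_one[OF v(1)] v(2) by simp
    moreover have "v \<in> Gamma R M a" using v(1) Gamma_iff by blast
    ultimately show "A \<in> Cl ` Gamma R M a" by blast
  qed
next
  show "Cl ` Gamma R M a \<subseteq> carrier (dirlim R S Phi)"
  proof
    fix A assume "A \<in> Cl ` Gamma R M a"
    then obtain v n where v: "v \<in> ann_in R M a (Suc n)" "A = Cl v" using Gamma_iff by blast
    have fc: "hv R M (J (Suc n)) v \<in> carrier (S n)" using v(1) S_carrier_hv by blast
    have "A = dl_rel S Phi `` {(n, hv R M (J (Suc n)) v)}" using class_eq[OF fc] hv_one[OF v(1)] v(2) by simp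
    then show "A \<in> carrier (dirlim R S Phi)" using fc unfolding dirlim_def quotient_def by auto
  qed
qed


lemma S_add: "f \<oplus>\<^bsub>S n\<^esub> g = f \<oplus>\<^bsub>Hom_mod R (quot_mod R (J (Suc n))) M\<^esub> g"
  by (simp add: hom_sys_def J_def)

lemma S_smult: "r \<odot>\<^bsub>S n\<^esub> g = r \<odot>\<^bsub>Hom_mod R (quot_mod R (J (Suc n))) M\<^esub> g"
  by (simp add: hom_sys_def J_def)

lemma ann_carr: "v \<in> ann_in R M a n \<Longrightarrow> v \<in> carrier M"
  by (simp add: ann_in_def)

lemma dirlim_add:
  assumes "v \<in> Gamma R M a" "w \<in> Gamma R M a"
  shows "Cl v \<oplus>\<^bsub>dirlim R S Phi\<^esub> Cl w = Cl (v \<oplus>\<^bsub>M\<^esub> w)"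
proof -
  have "Cl v \<oplus>\<^bsub>dirlim R S Phi\<^esub> Cl w = (\<Union>(n, x)\<in>Cl v. \<Union>(m, y)\<in>Cl w.
        dl_rel S Phi `` {(max n m, itr Phi n (max n m - n) x \<oplus>\<^bsub>S (max n m)\<^esub> itr Phi m (max n m - m) y)})"
    unfolding dirlim_def by (simp only: ring.simps module.simps)
  also have "\<dots> = Cl (v \<oplus>\<^bsub>M\<^esub> w)"
  proof (rule union2_const[OF Cl_nonempty[OF assms(1)] Cl_nonempty[OF assms(2)]])
    fix n x m y assume nx: "(n, x) \<in> Cl v" and my: "(m, y) \<in> Cl w"
    from Cl_elem[OF nx] have vn: "v \<in> ann_in R M a (Suc n)" and x: "x = hv R M (J (Suc n)) v" by auto
    from Cl_elem[OF my] have wm: "w \<in> ann_in R M a (Suc m)" and y: "y = hv R M (J (Suc m)) w" by auto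
    have nN: "n + (max n m - n) = max n m" "m + (max n m - m) = max n m" by auto
    have vN: "v \<in> ann_in R M a (Suc (max n m))" using vn ann_mono[of "Suc n" "Suc (max n m)"] by auto
    have wN: "w \<in> ann_in R M a (Suc (max n m))" using wm ann_mono[of "Suc m" "Suc (max n m)"] by auto
    have ix: "itr Phi n (max n m - n) x = hv R M (J (Suc (max n m))) v" unfolding x itr_hv[OF vn] nN ..
    have iy: "itr Phi m (max n m - m) y = hv R M (J (Suc (max n m))) w" unfolding y itr_hv[OF wm] nN ..
    have vwN: "v \<oplus>\<^bsub>M\<^esub> w \<in> ann_in R M a (Suc (max n m))" using ann_add[OF vN wN] .
    have sum: "itr Phi n (max n m - n) x \<oplus>\<^bsub>S (max n m)\<^esub> itr Phi m (max n m - m) y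
        = hv R M (J (Suc (max n m))) (v \<oplus>\<^bsub>M\<^esub> w)"
      unfolding ix iy S_add
      using hv_add[OF J_ideal ann_carr[OF vN] conjunct1[OF ann_kills[OF vN]] ann_carr[OF wN] conjunct1[OF ann_kills[OF wN]]] .
    have fc: "hv R M (J (Suc (max n m))) (v \<oplus>\<^bsub>M\<^esub> w) \<in> carrier (S (max n m))"
      using S_carrier_hv vwN by blast
    show "dl_rel S Phi `` {(max n m, itr Phi n (max n m - n) x \<oplus>\<^bsub>S (max n m)\<^esub> itr Phi m (max n m - m) y)}
        = Cl (v \<oplus>\<^bsub>M\<^esub> w)"
      unfolding sum class_eq[OF fc] hv_one[OF vwN] ..
  qed
  finally show ?thesis .
qed

lemma dirlim_smult:
  assumes "v \<in> Gamma R M a" "r \<in> carrier R"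
  shows "r \<odot>\<^bsub>dirlim R S Phi\<^esub> Cl v = Cl (r \<odot>\<^bsub>M\<^esub> v)"
proof -
  have "r \<odot>\<^bsub>dirlim R S Phi\<^esub> Cl v = (\<Union>(n, x)\<in>Cl v. dl_rel S Phi `` {(n, r \<odot>\<^bsub>S n\<^esub> x)})"
    unfolding dirlim_def by (simp only: module.simps)
  also have "\<dots> = Cl (r \<odot>\<^bsub>M\<^esub> v)"
  proof (rule union1_const[OF Cl_nonempty[OF assms(1)]])
    fix n x assume nx: "(n, x) \<in> Cl v"
    from Cl_elem[OF nx] have vn: "v \<in> ann_in R M a (Suc n)" and x: "x = hv R M (J (Suc n)) v" by auto
    have rv: "r \<odot>\<^bsub>M\<^esub> v \<in> ann_in R M a (Suc n)" using ann_smult[OF vn assms(2)] .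
    have sm: "r \<odot>\<^bsub>S n\<^esub> x = hv R M (J (Suc n)) (r \<odot>\<^bsub>M\<^esub> v)"
      unfolding x S_smult using hv_smult[OF J_ideal ann_carr[OF vn] conjunct1[OF ann_kills[OF vn]] assms(2)] .
    have fc: "hv R M (J (Suc n)) (r \<odot>\<^bsub>M\<^esub> v) \<in> carrier (S n)" using S_carrier_hv rv by blast
    show "dl_rel S Phi `` {(n, r \<odot>\<^bsub>S n\<^esub> x)} = Cl (r \<odot>\<^bsub>M\<^esub> v)"
      unfolding sm class_eq[OF fc] hv_one[OF rv] ..
  qed
  finally show ?thesis .
qed

lemma Gamma_add: "v \<in> Gamma R M a \<Longrightarrow> w \<in> Gamma R M a \<Longrightarrow> v \<oplus>\<^bsub>M\<^esub> w \<in> Gamma R M a"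
proof -
  assume "v \<in> Gamma R M a" "w \<in> Gamma R M a"
  then obtain n m where "v \<in> ann_in R M a (Suc n)" "w \<in> ann_in R M a (Suc m)" using Gamma_iff by blast
  then have "v \<in> ann_in R M a (Suc (max n m))" "w \<in> ann_in R M a (Suc (max n m))"
    using ann_mono[of "Suc n" "Suc (max n m)"] ann_mono[of "Suc m" "Suc (max n m)"] by auto
  then show ?thesis using ann_add Gamma_iff by blast
qed

lemma Gamma_smult: "v \<in> Gamma R M a \<Longrightarrow> r \<in> carrier R \<Longrightarrow> r \<odot>\<^bsub>M\<^esub> v \<in> Gamma R M a"
  using Gamma_iff ann_smult by blast


lemma upd_add[simp]: "x \<oplus>\<^bsub>M\<lparr>carrier := X\<rparr>\<^esub> y = x \<oplus>\<^bsub>M\<^esub> y" by simp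
lemma upd_smult[simp]: "r \<odot>\<^bsub>M\<lparr>carrier := X\<rparr>\<^esub> y = r \<odot>\<^bsub>M\<^esub> y" by simp
lemma upd_zero[simp]: "\<zero>\<^bsub>M\<lparr>carrier := X\<rparr>\<^esub> = \<zero>\<^bsub>M\<^esub>" by simp

lemma pow1: "a [^] (1::nat) = a"
  using a_carr by simp

lemma ann1_iff: "v \<in> ann_in R M a 1 \<longleftrightarrow> v \<in> carrier M \<and> a \<odot>\<^bsub>M\<^esub> v = \<zero>\<^bsub>M\<^esub>"
  unfolding ann_in_def pow1 by (simp only: mem_Collect_eq)

lemma ann2_iff: "v \<in> ann_in R M a 2 \<longleftrightarrow> v \<in> carrier M \<and> a [^] (2::nat) \<odot>\<^bsub>M\<^esub> v = \<zero>\<^bsub>M\<^esub>"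
  unfolding ann_in_def by (simp only: mem_Collect_eq)

lemma red_iff: "a_reduced R M a \<longleftrightarrow> ann_in R M a 2 \<subseteq> ann_in R M a 1"
  unfolding a_reduced_def subset_iff ann1_iff ann2_iff by blast

lemma red_down:
  assumes red: "a_reduced R M a"
  shows "v \<in> ann_in R M a (Suc k) \<Longrightarrow> v \<in> ann_in R M a 1"
proof (induction k arbitrary: v)
  case 0 then show ?case by simp
next
  case (Suc k)
  have vc: "v \<in> carrier M" using Suc.prems by (rule ann_carr)
  have h: "a [^] Suc (Suc k) \<odot>\<^bsub>M\<^esub> v = \<zero>\<^bsub>M\<^esub>" using Suc.prems by (simp only: ann_in_def mem_Collect_eq)
  define u where "u = a [^] k \<odot>\<^bsub>M\<^esub> v"
  have ak: "a [^] k \<in> carrier R" using a_carr by simp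
  have uc: "u \<in> carrier M" unfolding u_def using ak vc by simp
  have "a [^] (2::nat) \<odot>\<^bsub>M\<^esub> u = (a [^] (2::nat) \<otimes> a [^] k) \<odot>\<^bsub>M\<^esub> v"
    unfolding u_def using ak vc a_carr by (simp add: smult_assoc1)
  also have "a [^] (2::nat) \<otimes> a [^] k = a [^] Suc (Suc k)"
    using R.nat_pow_mult[OF a_carr, of 2 k] by simp
  finally have "a [^] (2::nat) \<odot>\<^bsub>M\<^esub> u = \<zero>\<^bsub>M\<^esub>" using h by simp
  then have "u \<in> ann_in R M a 2" using uc ann2_iff by blast
  then have "u \<in> ann_in R M a 1" using red red_iff by blast
  then have au: "a \<odot>\<^bsub>M\<^esub> u = \<zero>\<^bsub>M\<^esub>" using ann1_iff by blast
  have "a \<odot>\<^bsub>M\<^esub> u = (a \<otimes> a [^] k) \<odot>\<^bsub>M\<^esub> v"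
    unfolding u_def using ak vc a_carr by (simp add: smult_assoc1)
  also have "a \<otimes> a [^] k = a [^] Suc k" using R.nat_pow_Suc2[OF a_carr] by simp
  finally have "a [^] Suc k \<odot>\<^bsub>M\<^esub> v = \<zero>\<^bsub>M\<^esub>" using au by simp
  then have "v \<in> ann_in R M a (Suc k)" using vc by (simp only: ann_in_def mem_Collect_eq)
  then show ?case by (rule Suc.IH)
qed

lemma ann1_Gamma: "ann_in R M a 1 \<subseteq> Gamma R M a"
  using Gamma_iff[of _] by (metis One_nat_def subsetI)

lemma red_Gamma: "a_reduced R M a \<Longrightarrow> Gamma R M a = ann_in R M a 1"
  using ann1_Gamma red_down Gamma_iff by blast

lemma zero_ann1: "\<zero>\<^bsub>M\<^esub> \<in> ann_in R M a 1"
  using ann1_iff a_carr by simp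

lemma P2: "a_reduced R M a \<longleftrightarrow> (\<forall>k::nat. k \<ge> 1 \<longrightarrow> ann_in R M a 1 = ann_in R M a k)"
proof
  assume red: "a_reduced R M a"
  show "\<forall>k::nat. k \<ge> 1 \<longrightarrow> ann_in R M a 1 = ann_in R M a k"
  proof (intro allI impI)
    fix k :: nat assume k: "k \<ge> 1"
    then have "Suc (k - 1) = k" by arith
    then show "ann_in R M a 1 = ann_in R M a k"
      using ann_mono[OF k] red_down[OF red, of _ "k - 1"] by auto
  qed
next
  assume "\<forall>k::nat. k \<ge> 1 \<longrightarrow> ann_in R M a 1 = ann_in R M a k"
  then have "ann_in R M a 1 = ann_in R M a 2" by simp
  then show "a_reduced R M a" using red_iff by simp
qed

lemma P1: "a_reduced R M a \<longleftrightarrow> aGamma R M a = {\<zero>\<^bsub>M\<^esub>}"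
proof
  assume red: "a_reduced R M a"
  have "aGamma R M a = {a \<odot>\<^bsub>M\<^esub> m | m. m \<in> ann_in R M a 1}"
    unfolding aGamma_def red_Gamma[OF red] ..
  also have "\<dots> = {\<zero>\<^bsub>M\<^esub>}"
  proof (intro equalityI subsetI)
    fix x assume "x \<in> {a \<odot>\<^bsub>M\<^esub> m | m. m \<in> ann_in R M a 1}"
    then obtain m where "m \<in> ann_in R M a 1" "x = a \<odot>\<^bsub>M\<^esub> m" by blast
    then show "x \<in> {\<zero>\<^bsub>M\<^esub>}" using ann1_iff by blast
  next
    fix x assume "x \<in> {\<zero>\<^bsub>M\<^esub>}"
    then have "x = a \<odot>\<^bsub>M\<^esub> \<zero>\<^bsub>M\<^esub>" using a_carr by simp
    then show "x \<in> {a \<odot>\<^bsub>M\<^esub> m | m. m \<in> ann_in R M a 1}" using zero_ann1 by blast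
  qed
  finally show "aGamma R M a = {\<zero>\<^bsub>M\<^esub>}" .
next
  assume h: "aGamma R M a = {\<zero>\<^bsub>M\<^esub>}"
  show "a_reduced R M a" unfolding red_iff
  proof
    fix v assume v: "v \<in> ann_in R M a 2"
    then have "v \<in> Gamma R M a" using Gamma_iff[of v] by (metis numeral_2_eq_2)
    then have "a \<odot>\<^bsub>M\<^esub> v \<in> aGamma R M a" unfolding aGamma_def by blast
    then have "a \<odot>\<^bsub>M\<^esub> v = \<zero>\<^bsub>M\<^esub>" using h by blast
    then show "v \<in> ann_in R M a 1" using ann1_iff ann_carr[OF v] by blast
  qed
qed


lemma smult_comm: "r \<in> carrier R \<Longrightarrow> s \<in> carrier R \<Longrightarrow> x \<in> carrier M \<Longrightarrow>
  r \<odot>\<^bsub>M\<^esub> (s \<odot>\<^bsub>M\<^esub> x) = s \<odot>\<^bsub>M\<^esub> (r \<odot>\<^bsub>M\<^esub> x)"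
  by (metis R.m_comm smult_assoc1)

lemma neg_smult: "v \<in> carrier M \<Longrightarrow> \<ominus>\<^bsub>M\<^esub> v = (\<ominus> \<one>) \<odot>\<^bsub>M\<^esub> v"
  using smult_l_minus[OF R.one_closed, of v] by simp

lemma Gamma_carr: "Gamma R M a \<subseteq> carrier M"
  unfolding Gamma_def by blast

lemma Gamma_sub: "submodule (Gamma R M a) R M"
proof (rule submoduleI)
  show "Gamma R M a \<subseteq> carrier M" by (rule Gamma_carr)
  show "\<zero>\<^bsub>M\<^esub> \<in> Gamma R M a" using zero_ann1 ann1_Gamma by blast
  fix v assume v: "v \<in> Gamma R M a"
  then have "v \<in> carrier M" using Gamma_carr by blast
  then show "\<ominus>\<^bsub>M\<^esub> v \<in> Gamma R M a" using neg_smult Gamma_smult[OF v] by simp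
next
  fix v w assume "v \<in> Gamma R M a" "w \<in> Gamma R M a"
  then show "v \<oplus>\<^bsub>M\<^esub> w \<in> Gamma R M a" by (rule Gamma_add)
next
  fix r v assume "r \<in> carrier R" "v \<in> Gamma R M a"
  then show "r \<odot>\<^bsub>M\<^esub> v \<in> Gamma R M a" using Gamma_smult by blast
qed

lemma scaled_sub: "submodule (scaled_by M a) R M"
proof (rule submoduleI)
  show "scaled_by M a \<subseteq> carrier M" unfolding scaled_by_def using a_carr by auto
  have "\<zero>\<^bsub>M\<^esub> = a \<odot>\<^bsub>M\<^esub> \<zero>\<^bsub>M\<^esub>" using a_carr by simp
  then show "\<zero>\<^bsub>M\<^esub> \<in> scaled_by M a" unfolding scaled_by_def by blast
next
  fix v assume "v \<in> scaled_by M a"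
  then obtain x where x: "x \<in> carrier M" "v = a \<odot>\<^bsub>M\<^esub> x" unfolding scaled_by_def by blast
  then have "\<ominus>\<^bsub>M\<^esub> v = a \<odot>\<^bsub>M\<^esub> ((\<ominus> \<one>) \<odot>\<^bsub>M\<^esub> x)"
    using neg_smult smult_comm a_carr by simp
  moreover have "(\<ominus> \<one>) \<odot>\<^bsub>M\<^esub> x \<in> carrier M" using x by simp
  ultimately show "\<ominus>\<^bsub>M\<^esub> v \<in> scaled_by M a" unfolding scaled_by_def by blast
next
  fix v w assume "v \<in> scaled_by M a" "w \<in> scaled_by M a"
  then obtain x y where "x \<in> carrier M" "v = a \<odot>\<^bsub>M\<^esub> x" "y \<in> carrier M" "w = a \<odot>\<^bsub>M\<^esub> y"
    unfolding scaled_by_def by blast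
  then have "v \<oplus>\<^bsub>M\<^esub> w = a \<odot>\<^bsub>M\<^esub> (x \<oplus>\<^bsub>M\<^esub> y)" "x \<oplus>\<^bsub>M\<^esub> y \<in> carrier M"
    using a_carr by (simp_all add: smult_r_distr)
  then show "v \<oplus>\<^bsub>M\<^esub> w \<in> scaled_by M a" unfolding scaled_by_def by blast
next
  fix r v assume r: "r \<in> carrier R" and "v \<in> scaled_by M a"
  then obtain x where x: "x \<in> carrier M" "v = a \<odot>\<^bsub>M\<^esub> x" unfolding scaled_by_def by blast
  then have "r \<odot>\<^bsub>M\<^esub> v = a \<odot>\<^bsub>M\<^esub> (r \<odot>\<^bsub>M\<^esub> x)" "r \<odot>\<^bsub>M\<^esub> x \<in> carrier M"
    using smult_comm a_carr r by simp_all
  then show "r \<odot>\<^bsub>M\<^esub> v \<in> scaled_by M a" unfolding scaled_by_def by blast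
qed

lemma P5: "a_reduced R M a \<longleftrightarrow>
   mod_short_exact R (M\<lparr>carrier := Gamma R M a\<rparr>) M (M\<lparr>carrier := scaled_by M a\<rparr>)
      (\<lambda>m. m) (\<lambda>m. a \<odot>\<^bsub>M\<^esub> m)"
proof
  assume red: "a_reduced R M a"
  have m1: "module R (M\<lparr>carrier := Gamma R M a\<rparr>)"
    using submodule.submodule_is_module[OF Gamma_sub] module_axioms by blast
  have m2: "module R (M\<lparr>carrier := scaled_by M a\<rparr>)"
    using submodule.submodule_is_module[OF scaled_sub] module_axioms by blast
  have h1: "mod_hom R (M\<lparr>carrier := Gamma R M a\<rparr>) M (\<lambda>m. m)"
    unfolding mod_hom_def using Gamma_carr by auto
  have h2: "mod_hom R M (M\<lparr>carrier := scaled_by M a\<rparr>) (\<lambda>m. a \<odot>\<^bsub>M\<^esub> m)"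
    unfolding mod_hom_def
  proof (intro conjI ballI)
    show "(\<lambda>m. a \<odot>\<^bsub>M\<^esub> m) \<in> carrier M \<rightarrow> carrier (M\<lparr>carrier := scaled_by M a\<rparr>)"
      unfolding scaled_by_def by auto
    fix x y assume "x \<in> carrier M" "y \<in> carrier M"
    then show "a \<odot>\<^bsub>M\<^esub> (x \<oplus>\<^bsub>M\<^esub> y) = a \<odot>\<^bsub>M\<^esub> x \<oplus>\<^bsub>M\<lparr>carrier := scaled_by M a\<rparr>\<^esub> a \<odot>\<^bsub>M\<^esub> y"
      using a_carr by (simp add: smult_r_distr)
  next
    fix r x assume "r \<in> carrier R" "x \<in> carrier M"
    then show "a \<odot>\<^bsub>M\<^esub> (r \<odot>\<^bsub>M\<^esub> x) = r \<odot>\<^bsub>M\<lparr>carrier := scaled_by M a\<rparr>\<^esub> (a \<odot>\<^bsub>M\<^esub> x)"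
      using a_carr smult_comm by simp
  qed
  have img: "(\<lambda>m. m) ` carrier (M\<lparr>carrier := Gamma R M a\<rparr>) =
      {y \<in> carrier M. a \<odot>\<^bsub>M\<^esub> y = \<zero>\<^bsub>M\<lparr>carrier := scaled_by M a\<rparr>\<^esub>}"
    using red_Gamma[OF red] ann1_iff by auto
  have srj: "(\<lambda>m. a \<odot>\<^bsub>M\<^esub> m) ` carrier M = carrier (M\<lparr>carrier := scaled_by M a\<rparr>)"
    unfolding scaled_by_def by auto
  show "mod_short_exact R (M\<lparr>carrier := Gamma R M a\<rparr>) M (M\<lparr>carrier := scaled_by M a\<rparr>)
      (\<lambda>m. m) (\<lambda>m. a \<odot>\<^bsub>M\<^esub> m)"
    unfolding mod_short_exact_def using m1 m2 module_axioms h1 h2 img srj by simp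
next
  assume h: "mod_short_exact R (M\<lparr>carrier := Gamma R M a\<rparr>) M (M\<lparr>carrier := scaled_by M a\<rparr>)
      (\<lambda>m. m) (\<lambda>m. a \<odot>\<^bsub>M\<^esub> m)"
  then have img: "Gamma R M a = {y \<in> carrier M. a \<odot>\<^bsub>M\<^esub> y = \<zero>\<^bsub>M\<^esub>}"
    unfolding mod_short_exact_def by simp
  show "a_reduced R M a" unfolding red_iff
  proof
    fix v assume v: "v \<in> ann_in R M a 2"
    then have "v \<in> Gamma R M a" using Gamma_iff[of v] by (metis numeral_2_eq_2)
    then show "v \<in> ann_in R M a 1" using img ann1_iff by blast
  qed
qed


abbreviation H where "H \<equiv> Hom_mod R (quot_mod R (PIdl a)) M"

lemma ann1_kills: "v \<in> ann_in R M a 1 \<Longrightarrow> kills (PIdl a) v"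
  using kills_I ann1_iff by blast

lemma H_carrier_hv: "carrier H = hv R M (PIdl a) ` ann_in R M a 1"
proof
  show "carrier H \<subseteq> hv R M (PIdl a) ` ann_in R M a 1"
  proof
    fix f assume f: "f \<in> carrier H"
    note hr = hom_rep[OF I_ideal f]
    have "f (PIdl a +> \<one>) \<in> ann_in R M a 1"
      using hr(1,2) kills_I[OF hr(1)] ann1_iff by blast
    then show "f \<in> hv R M (PIdl a) ` ann_in R M a 1" using hr(3) by blast
  qed
next
  show "hv R M (PIdl a) ` ann_in R M a 1 \<subseteq> carrier H"
    using hv_hom[OF I_ideal] ann1_kills ann_carr by blast
qed

lemma H_kill: "f \<in> carrier H \<Longrightarrow> a \<odot>\<^bsub>H\<^esub> f = \<zero> \<odot>\<^bsub>H\<^esub> f"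
proof -
  assume "f \<in> carrier H"
  then obtain v where v: "v \<in> ann_in R M a 1" "f = hv R M (PIdl a) v" using H_carrier_hv by blast
  have vc: "v \<in> carrier M" using ann_carr[OF v(1)] .
  have "a \<odot>\<^bsub>H\<^esub> f = hv R M (PIdl a) (a \<odot>\<^bsub>M\<^esub> v)"
    unfolding v(2) using hv_smult[OF I_ideal vc ann1_kills[OF v(1)] a_carr] .
  also have "a \<odot>\<^bsub>M\<^esub> v = \<zero> \<odot>\<^bsub>M\<^esub> v" using v(1) vc ann1_iff by simp
  also have "hv R M (PIdl a) (\<zero> \<odot>\<^bsub>M\<^esub> v) = \<zero> \<odot>\<^bsub>H\<^esub> f"
    unfolding v(2) using hv_smult[OF I_ideal vc ann1_kills[OF v(1)] R.zero_closed] by (rule sym)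
  finally show ?thesis .
qed

lemma P4: "a_reduced R M a \<longleftrightarrow> mod_iso R (M\<lparr>carrier := Gamma R M a\<rparr>) H"
proof
  assume red: "a_reduced R M a"
  have G: "Gamma R M a = ann_in R M a 1" by (rule red_Gamma[OF red])
  have hom: "mod_hom R (M\<lparr>carrier := Gamma R M a\<rparr>) H (hv R M (PIdl a))"
    unfolding mod_hom_def
  proof (intro conjI ballI)
    show "hv R M (PIdl a) \<in> carrier (M\<lparr>carrier := Gamma R M a\<rparr>) \<rightarrow> carrier H"
      using H_carrier_hv G by auto
  next
    fix x y assume "x \<in> carrier (M\<lparr>carrier := Gamma R M a\<rparr>)" "y \<in> carrier (M\<lparr>carrier := Gamma R M a\<rparr>)"
    then have x: "x \<in> ann_in R M a 1" and y: "y \<in> ann_in R M a 1" using G by auto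
    show "hv R M (PIdl a) (x \<oplus>\<^bsub>M\<lparr>carrier := Gamma R M a\<rparr>\<^esub> y) =
        hv R M (PIdl a) x \<oplus>\<^bsub>H\<^esub> hv R M (PIdl a) y"
      unfolding upd_add
      using hv_add[OF I_ideal ann_carr[OF x] ann1_kills[OF x] ann_carr[OF y] ann1_kills[OF y]] by (rule sym)
  next
    fix r x assume r: "r \<in> carrier R" and "x \<in> carrier (M\<lparr>carrier := Gamma R M a\<rparr>)"
    then have x: "x \<in> ann_in R M a 1" using G by auto
    show "hv R M (PIdl a) (r \<odot>\<^bsub>M\<lparr>carrier := Gamma R M a\<rparr>\<^esub> x) = r \<odot>\<^bsub>H\<^esub> hv R M (PIdl a) x"
      unfolding upd_smult
      using hv_smult[OF I_ideal ann_carr[OF x] ann1_kills[OF x] r] by (rule sym)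
  qed
  have inj: "inj_on (hv R M (PIdl a)) (ann_in R M a 1)"
  proof (rule inj_onI)
    fix x y assume "x \<in> ann_in R M a 1" "y \<in> ann_in R M a 1" "hv R M (PIdl a) x = hv R M (PIdl a) y"
    then show "x = y" using hv_inj[OF I_ideal] ann_carr ann1_kills by meson
  qed
  have "bij_betw (hv R M (PIdl a)) (carrier (M\<lparr>carrier := Gamma R M a\<rparr>)) (carrier H)"
    unfolding bij_betw_def using inj H_carrier_hv G by simp
  then show "mod_iso R (M\<lparr>carrier := Gamma R M a\<rparr>) H" unfolding mod_iso_def using hom by blast
next
  assume "mod_iso R (M\<lparr>carrier := Gamma R M a\<rparr>) H"
  then obtain F where hom: "mod_hom R (M\<lparr>carrier := Gamma R M a\<rparr>) H F"
    and bij: "bij_betw F (Gamma R M a) (carrier H)" unfolding mod_iso_def by auto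
  have Fc: "\<And>x. x \<in> Gamma R M a \<Longrightarrow> F x \<in> carrier H" using bij bij_betwE by blast
  have Fs: "\<And>r x. r \<in> carrier R \<Longrightarrow> x \<in> Gamma R M a \<Longrightarrow> F (r \<odot>\<^bsub>M\<^esub> x) = r \<odot>\<^bsub>H\<^esub> F x"
    using hom unfolding mod_hom_def by simp
  show "a_reduced R M a" unfolding red_iff
  proof
    fix v assume v: "v \<in> ann_in R M a 2"
    then have vG: "v \<in> Gamma R M a" using Gamma_iff[of v] by (metis numeral_2_eq_2)
    have "F (a \<odot>\<^bsub>M\<^esub> v) = a \<odot>\<^bsub>H\<^esub> F v" using Fs[OF a_carr vG] .
    also have "\<dots> = \<zero> \<odot>\<^bsub>H\<^esub> F v" using H_kill[OF Fc[OF vG]] .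
    also have "\<dots> = F (\<zero> \<odot>\<^bsub>M\<^esub> v)" using Fs[OF R.zero_closed vG] by (rule sym)
    finally have "F (a \<odot>\<^bsub>M\<^esub> v) = F (\<zero> \<odot>\<^bsub>M\<^esub> v)" .
    moreover have "a \<odot>\<^bsub>M\<^esub> v \<in> Gamma R M a" "\<zero> \<odot>\<^bsub>M\<^esub> v \<in> Gamma R M a"
      using Gamma_smult[OF vG] a_carr by auto
    ultimately have "a \<odot>\<^bsub>M\<^esub> v = \<zero> \<odot>\<^bsub>M\<^esub> v" using bij unfolding bij_betw_def inj_on_def by blast
    then show "v \<in> ann_in R M a 1" using ann1_iff ann_carr[OF v] by simp
  qed
qed


definition Fd :: "(nat \<times> ('r set \<Rightarrow> 'm)) set \<Rightarrow> 'r set \<Rightarrow> 'm" where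
  "Fd A = hv R M (PIdl a) (SOME v. v \<in> Gamma R M a \<and> A = Cl v)"

lemma Fd_Cl: "v \<in> Gamma R M a \<Longrightarrow> Fd (Cl v) = hv R M (PIdl a) v"
proof -
  assume v: "v \<in> Gamma R M a"
  have "\<exists>w. w \<in> Gamma R M a \<and> Cl v = Cl w" using v by blast
  then have w: "(SOME w. w \<in> Gamma R M a \<and> Cl v = Cl w) \<in> Gamma R M a \<and> Cl v = Cl (SOME w. w \<in> Gamma R M a \<and> Cl v = Cl w)"
    by (rule someI_ex)
  then have "(SOME w. w \<in> Gamma R M a \<and> Cl v = Cl w) = v" using Cl_inj[OF v] by (elim conjE) (rule sym)
  then show ?thesis unfolding Fd_def by simp
qed

lemma D_obtain:
  assumes "A \<in> carrier (dirlim R S Phi)"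
  obtains v where "v \<in> Gamma R M a" "A = Cl v"
proof -
  have "A \<in> Cl ` Gamma R M a" using assms unfolding dirlim_carrier .
  then show ?thesis using that by (elim imageE) simp
qed

lemma P3: "a_reduced R M a \<longleftrightarrow> mod_iso R (dirlim R S Phi) H"
proof
  assume red: "a_reduced R M a"
  have G: "Gamma R M a = ann_in R M a 1" by (rule red_Gamma[OF red])
  have hom: "mod_hom R (dirlim R S Phi) H Fd"
    unfolding mod_hom_def
  proof (intro conjI ballI)
    show "Fd \<in> carrier (dirlim R S Phi) \<rightarrow> carrier H"
    proof
      fix A assume "A \<in> carrier (dirlim R S Phi)"
      then obtain v where v: "v \<in> Gamma R M a" "A = Cl v" by (rule D_obtain)
      have "v \<in> ann_in R M a 1" using v(1) unfolding G .
      then show "Fd A \<in> carrier H" unfolding v(2) Fd_Cl[OF v(1)] H_carrier_hv by (rule imageI)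
    qed
  next
    fix A B assume "A \<in> carrier (dirlim R S Phi)" "B \<in> carrier (dirlim R S Phi)"
    then obtain v w where v: "v \<in> Gamma R M a" "A = Cl v" and w: "w \<in> Gamma R M a" "B = Cl w"
      by (meson D_obtain)
    have x: "v \<in> ann_in R M a 1" using v(1) unfolding G .
    have y: "w \<in> ann_in R M a 1" using w(1) unfolding G .
    show "Fd (A \<oplus>\<^bsub>dirlim R S Phi\<^esub> B) = Fd A \<oplus>\<^bsub>H\<^esub> Fd B"
      unfolding v(2) w(2) dirlim_add[OF v(1) w(1)] Fd_Cl[OF v(1)] Fd_Cl[OF w(1)] Fd_Cl[OF Gamma_add[OF v(1) w(1)]]
      using hv_add[OF I_ideal ann_carr[OF x] ann1_kills[OF x] ann_carr[OF y] ann1_kills[OF y]] by (rule sym)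
  next
    fix r A assume r: "r \<in> carrier R" and A: "A \<in> carrier (dirlim R S Phi)"
    obtain v where v: "v \<in> Gamma R M a" "A = Cl v" using A by (rule D_obtain)
    have x: "v \<in> ann_in R M a 1" using v(1) unfolding G .
    show "Fd (r \<odot>\<^bsub>dirlim R S Phi\<^esub> A) = r \<odot>\<^bsub>H\<^esub> Fd A"
      unfolding v(2) dirlim_smult[OF v(1) r] Fd_Cl[OF v(1)] Fd_Cl[OF Gamma_smult[OF v(1) r]]
      using hv_smult[OF I_ideal ann_carr[OF x] ann1_kills[OF x] r] by (rule sym)
  qed
  have inj: "inj_on Fd (carrier (dirlim R S Phi))"
  proof (rule inj_onI)
    fix A B assume "A \<in> carrier (dirlim R S Phi)" "B \<in> carrier (dirlim R S Phi)" "Fd A = Fd B"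
    then obtain v w where v: "v \<in> Gamma R M a" "A = Cl v" and w: "w \<in> Gamma R M a" "B = Cl w"
      and e: "Fd A = Fd B" by (meson D_obtain)
    have x: "v \<in> ann_in R M a 1" using v(1) unfolding G .
    have y: "w \<in> ann_in R M a 1" using w(1) unfolding G .
    have "hv R M (PIdl a) v = hv R M (PIdl a) w" using e unfolding v(2) w(2) Fd_Cl[OF v(1)] Fd_Cl[OF w(1)] .
    then have "v = w" using hv_inj[OF I_ideal ann_carr[OF x] ann1_kills[OF x] ann_carr[OF y] ann1_kills[OF y]] by blast
    then show "A = B" unfolding v(2) w(2) by (rule arg_cong)
  qed
  have img: "Fd ` carrier (dirlim R S Phi) = carrier H"
  proof -
    have "Fd ` carrier (dirlim R S Phi) = (\<lambda>v. Fd (Cl v)) ` Gamma R M a"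
      unfolding dirlim_carrier by (simp add: image_image)
    also have "\<dots> = hv R M (PIdl a) ` Gamma R M a" using Fd_Cl by (rule image_cong[OF refl])
    also have "\<dots> = carrier H" unfolding G H_carrier_hv ..
    finally show ?thesis .
  qed
  show "mod_iso R (dirlim R S Phi) H" unfolding mod_iso_def bij_betw_def using hom inj img by blast
next
  assume "mod_iso R (dirlim R S Phi) H"
  then obtain F where hom: "mod_hom R (dirlim R S Phi) H F"
    and bij: "bij_betw F (carrier (dirlim R S Phi)) (carrier H)" unfolding mod_iso_def by auto
  have Fc: "\<And>x. x \<in> carrier (dirlim R S Phi) \<Longrightarrow> F x \<in> carrier H" using bij bij_betwE by blast
  have Fs0: "\<forall>r\<in>carrier R. \<forall>x\<in>carrier (dirlim R S Phi).
      F (r \<odot>\<^bsub>dirlim R S Phi\<^esub> x) = r \<odot>\<^bsub>H\<^esub> F x"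
    using hom unfolding mod_hom_def by (elim conjE) assumption
  have Fs: "\<And>r x. r \<in> carrier R \<Longrightarrow> x \<in> carrier (dirlim R S Phi) \<Longrightarrow>
      F (r \<odot>\<^bsub>dirlim R S Phi\<^esub> x) = r \<odot>\<^bsub>H\<^esub> F x"
    using Fs0 by blast
  show "a_reduced R M a" unfolding red_iff
  proof
    fix v assume v: "v \<in> ann_in R M a 2"
    then have vG: "v \<in> Gamma R M a" using Gamma_iff[of v] by (metis numeral_2_eq_2)
    have Cv: "Cl v \<in> carrier (dirlim R S Phi)" using vG dirlim_carrier by blast
    have avG: "a \<odot>\<^bsub>M\<^esub> v \<in> Gamma R M a" using Gamma_smult[OF vG a_carr] .
    have zvG: "\<zero> \<odot>\<^bsub>M\<^esub> v \<in> Gamma R M a" using Gamma_smult[OF vG R.zero_closed] .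
    have "F (Cl (a \<odot>\<^bsub>M\<^esub> v)) = F (a \<odot>\<^bsub>dirlim R S Phi\<^esub> Cl v)" unfolding dirlim_smult[OF vG a_carr] ..
    also have "\<dots> = a \<odot>\<^bsub>H\<^esub> F (Cl v)" using Fs[OF a_carr Cv] .
    also have "\<dots> = \<zero> \<odot>\<^bsub>H\<^esub> F (Cl v)" using H_kill[OF Fc[OF Cv]] .
    also have "\<dots> = F (\<zero> \<odot>\<^bsub>dirlim R S Phi\<^esub> Cl v)" using Fs[OF R.zero_closed Cv] by (rule sym)
    also have "\<dots> = F (Cl (\<zero> \<odot>\<^bsub>M\<^esub> v))" unfolding dirlim_smult[OF vG R.zero_closed] ..
    finally have "F (Cl (a \<odot>\<^bsub>M\<^esub> v)) = F (Cl (\<zero> \<odot>\<^bsub>M\<^esub> v))" .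
    moreover have "Cl (a \<odot>\<^bsub>M\<^esub> v) \<in> carrier (dirlim R S Phi)" "Cl (\<zero> \<odot>\<^bsub>M\<^esub> v) \<in> carrier (dirlim R S Phi)"
      using avG zvG dirlim_carrier by blast+
    ultimately have "Cl (a \<odot>\<^bsub>M\<^esub> v) = Cl (\<zero> \<odot>\<^bsub>M\<^esub> v)"
      using bij unfolding bij_betw_def inj_on_def by blast
    then have "a \<odot>\<^bsub>M\<^esub> v = \<zero> \<odot>\<^bsub>M\<^esub> v" using Cl_inj[OF avG] by blast
    then show "v \<in> ann_in R M a 1" using ann1_iff ann_carr[OF v] by simp
  qed
qed

end

theorem mainTheorem1:
  fixes R :: "('r,'x) ring_scheme" and M :: "('r,'m,'y) module_scheme" and a :: 'r
  assumes "cring R" and "module R M" and "a \<in> carrier R"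
  defines "\<aa> \<equiv> PIdl\<^bsub>R\<^esub> a"
  shows "(a_reduced R M a \<longleftrightarrow> aGamma R M a = {\<zero>\<^bsub>M\<^esub>})
    \<and> (a_reduced R M a \<longleftrightarrow> (\<forall>k::nat. k \<ge> 1 \<longrightarrow> ann_in R M a 1 = ann_in R M a k))
    \<and> (a_reduced R M a \<longleftrightarrow>
         mod_iso R (dirlim R (hom_sys R M \<aa>) (hom_sys_map R \<aa>)) (Hom_mod R (quot_mod R \<aa>) M))
    \<and> (a_reduced R M a \<longleftrightarrow> mod_iso R (M\<lparr>carrier := Gamma R M a\<rparr>) (Hom_mod R (quot_mod R \<aa>) M))
    \<and> (a_reduced R M a \<longleftrightarrow>
         mod_short_exact R (M\<lparr>carrier := Gamma R M a\<rparr>) M (M\<lparr>carrier := scaled_by M a\<rparr>)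
           (\<lambda>m. m) (\<lambda>m. a \<odot>\<^bsub>M\<^esub> m))"
proof -
  interpret mt R M a using assms(2,3) by (intro mt.intro mt_axioms.intro)
  show ?thesis unfolding \<aa>_def by (intro conjI P1 P2 P3 P4 P5)
qed

end
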